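(* Consider the data-driven robust unit commitment setting described in the context, with $\varepsilon,\delta\in(0,1)$. Select two disjoint groups from the forecast-error data $e_1,\dots,e_N$, with realizations $e_{1}^{(1)},\dots,e_{N_1}^{(1)}$ and $e_{1}^{(2)},\dots,e_{N_2}^{(2)}$, where $N_1 + N_2 \leq N$ and $N_2 \geq \log_{1 - \varepsilon} \delta$. Let $$\mu := \frac{1}{N_1} \sum_{n = 1}^{N_1} e_n^{(1)},\qquad \Sigma := \frac{1}{N_1 - 1} \sum_{n = 1}^{N_1} ( e_n^{(1)} - \mu ) ( e_n^{(1)} - \mu )^\top,$$ and assume $\Sigma$ is invertible. Define $a(e) := (e - \mu)^\top \Sigma^{-1} (e - \mu)$. For a positive integer $K$ let $$n_K^* := \min \Big\{ n \in \mathbb{N} ~\Big|~ \sum_{m = 0}^{n - 1} \binom{K}{m} (1 - \varepsilon)^m \varepsilon^{K - m} \geq 1 - \delta \Big\}.$$ Let $\alpha$ be the $n_{N_2}^*$-th smallest value among $a(e_1^{(2)}), \dots, a(e_{N_2}^{(2)})$, and define $\mathcal{E} := \{ e ~|~ (e - \mu)^\top \Sigma^{-1} (e - \mu) \leq \alpha \}$. Then $$\mathbb{P}^N\big[\Pr[e \in \mathcal{E}] \geq 1 - \varepsilon\big] \geq 1 - \delta .$$ Moreover, if $\mathcal{U}_1 := \{ u \in \mathcal{U}_0 ~|~ u - \hat{u} \in \mathcal{E} \}$ is used as the uncertainty set $\mathcal U$ in the robust problem defining $O_{\mathcal U}$ and $x_0$ is an optimal solution of that problem, then $$\mathbb{P}^N[O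 \leq O_{x_0} \leq O_{\mathcal{U}_1}] \geq 1 - \delta.$$
   Context: The uncertain load vector is $u=\hat u+e$, where $\hat u$ is a fixed prediction and the forecast error $e$ is a continuous random vector with distribution $\mathbb P$. The historical forecast errors $e_1,\dots,e_N$ are i.i.d. with distribution $\mathbb P$ (independent of the new error $e$); $\mathbb P^N$ denotes their joint distribution (so sets built from the data are random), and $\Pr$ refers to the distribution of the new $e$ (equivalently $u$). $\mathcal U_0=\{u\mid \underline U\le u\le \overline U\}$ is a set with $\Pr[u\in\mathcal U_0]=1$. The robust unit commitment problem has the compact form: for an uncertainty set $\mathcal U$, $$O_{\mathcal{U}} := \min_{x \in \mathcal{X}} \Big\{ C^\top x + \max_{u \in \mathcal{U}} \min_{y:\, A y \geq B x + D u + E} F^\top y \Big\},$$ where $\mathcal X$ is the (mixed-integer linear) pre-dispatch feasible set of unit commitment and $A,B,C,D,E,F$ are given coefficient matrices/vectors; write $f(x)=C^\top x$, $h(y)=F^\top y$, $\mathcal Y(x,u)=\{y: Ay\ge Bx+Du+E\}$, with minimum over an empty set equal to $+\infty$. The chance-constrained problem has value $O := \min_{x \in \mathcal{X}, \eta}\{ f(x) + \eta : \Pr[ \min_{y \in \mathcal{Y}(x, u)} h(y) \leq \eta ] \geq 1 - \varepsilon\}$, and for $x\in\mathcal X$, $O_x := f(x) + \min \{ \eta \mid \Pr [ \min_{y \in \mathcal{Y}(x, u)} h(y) \leq \eta ] \geq 1 - \varepsilon \}$. Optimal solutions of these problems are assumed to exist. *)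

theory Defs
  imports "HOL-Probability.Probability"
begin

definition smean :: "(nat \<Rightarrow> real^'n) \<Rightarrow> nat set \<Rightarrow> real^'n" where
  "smean \<omega> I = (1 / real (card I)) *\<^sub>R (\<Sum>i\<in>I. \<omega> i)"

definition outer :: "real^'n \<Rightarrow> real^'n \<Rightarrow> real^'n^'n" where
  "outer x y = (\<chi> i j. x $ i * y $ j)"

definition scov :: "(nat \<Rightarrow> real^'n) \<Rightarrow> nat set \<Rightarrow> real^'n^'n" where
  "scov \<omega> I = (1 / (real (card I) - 1)) *\<^sub>R
     (\<Sum>i\<in>I. outer (\<omega> i - smean \<omega> I) (\<omega> i - smean \<omega> I))"

definition mdist :: "real^'n \<Rightarrow> real^'n^'n \<Rightarrow> real^'n \<Rightarrow> real" where
  "mdist \<mu> \<Sigma> e = (e - \<mu>) \<bullet> (matrix_inv \<Sigma> *v (e - \<mu>))"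

definition nstar :: "nat \<Rightarrow> real \<Rightarrow> real \<Rightarrow> nat" where
  "nstar K \<epsilon> \<delta> = (LEAST n. (\<Sum>m<n. real (K choose m) * (1 - \<epsilon>) ^ m * \<epsilon> ^ (K - m)) \<ge> 1 - \<delta>)"

text \<open>alpha: the n*_{N2}-th smallest value among a(e_i), i in I2 (1-based rank).\<close>
definition alpha_thr :: "(nat \<Rightarrow> real^'n) \<Rightarrow> nat set \<Rightarrow> nat set \<Rightarrow> real \<Rightarrow> real \<Rightarrow> real" where
  "alpha_thr \<omega> I1 I2 \<epsilon> \<delta> =
     sort (map (\<lambda>i. mdist (smean \<omega> I1) (scov \<omega> I1) (\<omega> i)) (sorted_list_of_set I2))
       ! (nstar (card I2) \<epsilon> \<delta> - 1)"

definition Eset :: "(nat \<Rightarrow> real^'n) \<Rightarrow> nat set \<Rightarrow> nat set \<Rightarrow> real \<Rightarrow> real \<Rightarrow> (real^'n) set" where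
  "Eset \<omega> I1 I2 \<epsilon> \<delta> =
     {e. mdist (smean \<omega> I1) (scov \<omega> I1) e \<le> alpha_thr \<omega> I1 I2 \<epsilon> \<delta>}"

definition Yset :: "real^'m^'r \<Rightarrow> real^'k^'r \<Rightarrow> real^'n^'r \<Rightarrow> real^'r
    \<Rightarrow> real^'k \<Rightarrow> real^'n \<Rightarrow> (real^'m) set" where
  "Yset A B D E x u = {y. B *v x + D *v u + E \<le> A *v y}"

text \<open>min_{y in Y(x,u)} F^T y, with the minimum over the empty set equal to +infinity.\<close>
definition Qval :: "real^'m^'r \<Rightarrow> real^'k^'r \<Rightarrow> real^'n^'r \<Rightarrow> real^'r \<Rightarrow> real^'m
    \<Rightarrow> real^'k \<Rightarrow> real^'n \<Rightarrow> ereal" where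
  "Qval A B D E F x u = (INF y\<in>Yset A B D E x u. ereal (F \<bullet> y))"

definition robval :: "real^'m^'r \<Rightarrow> real^'k^'r \<Rightarrow> real^'k \<Rightarrow> real^'n^'r \<Rightarrow> real^'r
    \<Rightarrow> real^'m \<Rightarrow> (real^'n) set \<Rightarrow> real^'k \<Rightarrow> ereal" where
  "robval A B C D E F U x = ereal (C \<bullet> x) + (SUP u\<in>U. Qval A B D E F x u)"

definition O_rob :: "(real^'k) set \<Rightarrow> real^'m^'r \<Rightarrow> real^'k^'r \<Rightarrow> real^'k \<Rightarrow> real^'n^'r
    \<Rightarrow> real^'r \<Rightarrow> real^'m \<Rightarrow> (real^'n) set \<Rightarrow> ereal" where
  "O_rob X A B C D E F U = (INF x\<in>X. robval A B C D E F U x)"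

definition O_x :: "(real^'n) measure \<Rightarrow> real^'n \<Rightarrow> real^'m^'r \<Rightarrow> real^'k^'r \<Rightarrow> real^'k
    \<Rightarrow> real^'n^'r \<Rightarrow> real^'r \<Rightarrow> real^'m \<Rightarrow> real \<Rightarrow> real^'k \<Rightarrow> ereal" where
  "O_x P uhat A B C D E F \<epsilon> x =
     ereal (C \<bullet> x) + (INF \<eta>\<in>{\<eta>::real. measure P {e \<in> space P. Qval A B D E F x (uhat + e) \<le> ereal \<eta>}
                                   \<ge> 1 - \<epsilon>}. ereal \<eta>)"

definition O_cc :: "(real^'n) measure \<Rightarrow> real^'n \<Rightarrow> (real^'k) set \<Rightarrow> real^'m^'r \<Rightarrow> real^'k^'r
    \<Rightarrow> real^'k \<Rightarrow> real^'n^'r \<Rightarrow> real^'r \<Rightarrow> real^'m \<Rightarrow> real \<Rightarrow> ereal" where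
  "O_cc P uhat X A B C D E F \<epsilon> =
     Inf {ereal (C \<bullet> x + \<eta>) | x \<eta>. x \<in> X \<and>
            measure P {e \<in> space P. Qval A B D E F x (uhat + e) \<le> ereal \<eta>} \<ge> 1 - \<epsilon>}"

text \<open>Inner probability statement: the event S has (inner) probability at least p.\<close>
definition prob_atleast :: "'a measure \<Rightarrow> 'a set \<Rightarrow> real \<Rightarrow> bool" where
  "prob_atleast M S p \<longleftrightarrow> (\<exists>A\<in>sets M. A \<subseteq> S \<and> measure M A \<ge> p)"

end

theory Submission
  imports Defs
begin


lemma vec_meas:
  fixes v :: "'a \<Rightarrow> real^'n"
  assumes "\<And>k. (\<lambda>x. v x $ k) \<in> borel_measurable M"
  shows "v \<in> borel_measurable M"
proof (subst borel_measurable_euclidean_space, intro ballI)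
  fix b :: "real^'n" assume "b \<in> Basis"
  then obtain i where b: "b = axis i 1" by (auto simp: Basis_vec_def)
  have "(\<lambda>x. v x \<bullet> b) = (\<lambda>x. v x $ i)" by (simp add: b inner_axis)
  then show "(\<lambda>x. v x \<bullet> b) \<in> borel_measurable M" using assms by simp
qed

lemma comp_meas:
  fixes v :: "'a \<Rightarrow> real^'n"
  assumes "v \<in> borel_measurable M"
  shows "(\<lambda>x. v x $ k) \<in> borel_measurable M"
proof -
  have "(\<lambda>y::real^'n. y $ k) \<in> borel_measurable borel"
    by (intro borel_measurable_continuous_onI linear_continuous_on bounded_linear_vec_nth)
  from measurable_compose[OF assms this] show ?thesis .
qed

lemma meas_smean:
  fixes w :: "'a \<Rightarrow> nat \<Rightarrow> real^'n"
  assumes "\<And>l k. l \<in> I \<Longrightarrow> (\<lambda>x. w x l $ k) \<in> borel_measurable M"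
  shows "(\<lambda>x. smean (w x) I $ k) \<in> borel_measurable M"
proof -
  have "(\<lambda>x. smean (w x) I $ k) = (\<lambda>x. (1 / real (card I)) * (\<Sum>l\<in>I. w x l $ k))"
    unfolding smean_def by (simp only: vector_scaleR_component sum_component) simp
  then show ?thesis using assms
    by (simp only:) (intro borel_measurable_times borel_measurable_const borel_measurable_sum, blast)
qed

lemma meas_scov:
  fixes w :: "'a \<Rightarrow> nat \<Rightarrow> real^'n"
  assumes w: "\<And>l k. l \<in> I \<Longrightarrow> (\<lambda>x. w x l $ k) \<in> borel_measurable M"
  shows "(\<lambda>x. scov (w x) I $ a $ b) \<in> borel_measurable M"
proof -
  have m: "(\<lambda>x. smean (w x) I $ k) \<in> borel_measurable M" for k by (rule meas_smean[OF w])
  have "(\<lambda>x. scov (w x) I $ a $ b) = (\<lambda>x. (1 / (real (card I) - 1)) *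
      (\<Sum>l\<in>I. (w x l $ a - smean (w x) I $ a) * (w x l $ b - smean (w x) I $ b)))"
    unfolding scov_def outer_def by (simp only: vector_scaleR_component sum_component vec_lambda_beta vector_minus_component real_scaleR_def)
  then show ?thesis using w m
    by (simp only:) (intro borel_measurable_times borel_measurable_const borel_measurable_sum borel_measurable_diff; blast)
qed

lemma meas_det:
  fixes m :: "'a \<Rightarrow> real^'n^'n"
  assumes "\<And>a b. (\<lambda>x. m x $ a $ b) \<in> borel_measurable M"
  shows "(\<lambda>x. det (m x)) \<in> borel_measurable M"
  unfolding det_def
  by (intro borel_measurable_sum borel_measurable_times borel_measurable_const borel_measurable_prod assms)

lemma matrix_inv_cramer:
  fixes A :: "real^'n^'n"
  assumes "det A \<noteq> 0"
  shows "matrix_inv A $ i $ j = det (\<chi> a b. if b = i then (if a = j then 1 else 0) else A $ a $ b) / det A"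
proof -
  have inv: "invertible A" using assms invertible_det_nz by blast
  have "A ** matrix_inv A = mat 1" using inv
    by (metis (mono_tags, lifting) invertible_def matrix_inv_def someI_ex)
  then have "A *v (matrix_inv A *v axis j 1) = axis j 1"
    by (simp add: matrix_vector_mul_assoc)
  then have "matrix_inv A *v axis j 1 = (\<chi> k. det(\<chi> a b. if b=k then (axis j 1 :: real^'n)$a else A$a$b) / det A)"
    using cramer[OF assms] by blast
  moreover have "(matrix_inv A *v axis j 1) $ i = matrix_inv A $ i $ j"
    by (simp add: matrix_vector_mult_def axis_def if_distrib cong: if_cong)
  moreover have ax: "(axis j 1 :: real^'n) $ a = (if a = j then 1 else 0)" for a by (simp add: axis_def)
  ultimately show ?thesis by (simp only: ax vec_lambda_beta)
qed

lemma matrix_inv_sing: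
  fixes A :: "real^'n^'n"
  assumes "det A = 0"
  shows "matrix_inv A = (SOME A'::real^'n^'n. False)"
proof -
  have "\<not> invertible A" using assms invertible_det_nz by blast
  then have "(\<lambda>A'::real^'n^'n. A ** A' = mat 1 \<and> A' ** A = mat 1) = (\<lambda>_. False)"
    unfolding invertible_def by auto
  then show ?thesis unfolding matrix_inv_def by simp
qed

lemma meas_minv:
  fixes m :: "'a \<Rightarrow> real^'n^'n"
  assumes m: "\<And>a b. (\<lambda>x. m x $ a $ b) \<in> borel_measurable M"
  shows "(\<lambda>x. matrix_inv (m x) $ i $ j) \<in> borel_measurable M"
proof -
  have eq: "(\<lambda>x. matrix_inv (m x) $ i $ j) = (\<lambda>x. if det (m x) \<noteq> 0 then
      det (\<chi> a b. if b = i then (if a = j then 1 else 0) else m x $ a $ b) / det (m x)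
      else (SOME A'::real^'n^'n. False) $ i $ j)"
    using matrix_inv_cramer matrix_inv_sing by fastforce
  have d: "(\<lambda>x. det (m x)) \<in> borel_measurable M" by (rule meas_det[OF m])
  have d2: "(\<lambda>x. det (\<chi> a b. if b = i then (if a = j then 1 else 0) else m x $ a $ b :: real^'n^'n)) \<in> borel_measurable M"
  proof (rule meas_det)
    fix a b
    show "(\<lambda>x. (\<chi> a b. if b = i then (if a = j then 1 else 0) else m x $ a $ b :: real^'n^'n) $ a $ b) \<in> borel_measurable M"
      using m by (cases "b = i") simp_all
  qed
  have p: "{x\<in>space M. det (m x) \<noteq> 0} \<in> sets M"
    using d by measurable
  show ?thesis unfolding eq
    by (rule measurable_If[OF borel_measurable_divide[OF d2 d] borel_measurable_const p])
qed



lemma downset_seq: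
  fixes D :: "real set"
  assumes down: "\<And>x y. y \<in> D \<Longrightarrow> x \<le> y \<Longrightarrow> x \<in> D" and ne: "D \<noteq> {}"
  shows "\<exists>t. incseq t \<and> (\<forall>k. t k \<in> D) \<and> (\<forall>d\<in>D. \<exists>k. d \<le> t k)"
proof (cases "\<exists>q\<in>D. \<forall>d\<in>D. d \<le> q")
  case True
  then obtain q where "q \<in> D" "\<forall>d\<in>D. d \<le> q" by blast
  then show ?thesis by (intro exI[of _ "\<lambda>_. q"]) (auto simp: incseq_def)
next
  case nm: False
  show ?thesis
  proof (cases "bdd_above D")
    case bdd: True
    define t where "t k = Sup D - 1 / (real k + 1)" for k
    have tD: "t k \<in> D" for k
    proof -
      have "t k < Sup D" unfolding t_def by simp
      then obtain d where "d \<in> D" "t k < d" using less_cSup_iff[OF ne bdd] by blast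
      then show ?thesis using down by auto
    qed
    have inc: "incseq t"
      unfolding incseq_def t_def by (auto intro!: divide_left_mono mult_pos_pos)
    have cov: "\<exists>k. d \<le> t k" if "d \<in> D" for d
    proof -
      have "d \<le> Sup D" using cSup_upper[OF that bdd] .
      moreover have "d \<noteq> Sup D" using nm that cSup_upper[OF _ bdd] by auto
      ultimately have "0 < Sup D - d" by simp
      then obtain n where n: "n > 0" "inverse (real n) < Sup D - d" using ex_inverse_of_nat_less by blast
      have "1 / (real n + 1) \<le> inverse (real n)" using n(1) by (simp add: field_simps)
      then have "d \<le> t n" using n unfolding t_def by simp
      then show ?thesis by blast
    qed
    show ?thesis using tD inc cov by blast
  next
    case nb: False
    have tD: "real k \<in> D" for k
    proof -
      from nb obtain d where "d \<in> D" "real k < d" unfolding bdd_above_def by (meson not_le)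
      then show ?thesis using down by auto
    qed
    have inc: "incseq (\<lambda>k. real k)" by (simp add: incseq_def)
    have cov: "\<exists>k. d \<le> real k" for d using real_arch_simple by blast
    show ?thesis using tD inc cov by blast
  qed
qed

lemma pit:
  fixes f :: "'a \<Rightarrow> real"
  assumes Pp: "prob_space P" and f: "f \<in> borel_measurable P" and c: "0 \<le> c"
  shows "{e\<in>space P. measure P {e'\<in>space P. f e' \<le> f e} < c} \<in> sets P \<and>
         measure P {e\<in>space P. measure P {e'\<in>space P. f e' \<le> f e} < c} \<le> c"
proof -
  interpret prob_space P by (rule Pp)
  define G where "G t = measure P {e'\<in>space P. f e' \<le> t}" for t
  have ms: "{e'\<in>space P. f e' \<le> t} \<in> sets P" for t
  proof -
    have "f -` {..t} \<inter> space P \<in> sets P" by (intro measurable_sets[OF f] borel_closed closed_atMost)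
    moreover have "f -` {..t} \<inter> space P = {e'\<in>space P. f e' \<le> t}" by auto
    ultimately show ?thesis by simp
  qed
  have mono: "G x \<le> G y" if "x \<le> y" for x y
    unfolding G_def using that ms by (intro finite_measure_mono) auto
  define D where "D = {t. G t < c}"
  have down: "x \<in> D" if "y \<in> D" "x \<le> y" for x y
    using that mono[of x y] unfolding D_def by auto
  have eq0: "{e\<in>space P. measure P {e'\<in>space P. f e' \<le> f e} < c} = {e\<in>space P. f e \<in> D}"
    unfolding D_def G_def by simp
  show ?thesis
  proof (cases "D = {}")
    case True
    then show ?thesis unfolding eq0 using c by simp
  next
    case False
    have "\<exists>t. incseq t \<and> (\<forall>k. t k \<in> D) \<and> (\<forall>d\<in>D. \<exists>k. d \<le> t k)"
      by (rule downset_seq) (use down False in auto)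
    then obtain t where t: "incseq t" "\<And>k. t k \<in> D" "\<And>d. d \<in> D \<Longrightarrow> \<exists>k. d \<le> t k"
      by auto
    have eq: "{e\<in>space P. f e \<in> D} = (\<Union>k. {e\<in>space P. f e \<le> t k})"
    proof (intro equalityI subsetI)
      fix e assume "e \<in> {e\<in>space P. f e \<in> D}"
      then obtain k where "e \<in> space P" "f e \<le> t k" using t(3) by auto
      then show "e \<in> (\<Union>k. {e\<in>space P. f e \<le> t k})" by auto
    next
      fix e assume "e \<in> (\<Union>k. {e\<in>space P. f e \<le> t k})"
      then obtain k where "e \<in> space P" "f e \<le> t k" by auto
      then show "e \<in> {e\<in>space P. f e \<in> D}" using down[OF t(2)] by auto
    qed
    have rs: "range (\<lambda>k. {e\<in>space P. f e \<le> t k}) \<subseteq> sets P" using ms by auto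
    have inc: "incseq (\<lambda>k. {e\<in>space P. f e \<le> t k})"
      using t(1) unfolding incseq_def by (auto dest: order_trans)
    have lim: "(\<lambda>k. G (t k)) \<longlonglongrightarrow> measure P (\<Union>k. {e\<in>space P. f e \<le> t k})"
      unfolding G_def by (rule finite_Lim_measure_incseq[OF rs inc])
    have "measure P (\<Union>k. {e\<in>space P. f e \<le> t k}) \<le> c"
      by (rule LIMSEQ_le_const2[OF lim]) (use t(2) D_def in \<open>auto intro: less_imp_le\<close>)
    moreover have "(\<Union>k. {e\<in>space P. f e \<le> t k}) \<in> sets P" using rs by auto
    ultimately show ?thesis unfolding eq0 eq by simp
  qed
qed


definition Sb :: "real \<Rightarrow> nat \<Rightarrow> nat \<Rightarrow> real" where
  "Sb p K n = (\<Sum>m<n. real (K choose m) * p ^ m * (1 - p) ^ (K - m))"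

lemma Sb_0: "Sb p K 0 = 0" by (simp add: Sb_def)

lemma Sb_zero_K: "Sb p 0 (Suc n) = 1"
proof (induction n)
  case 0 then show ?case by (simp add: Sb_def)
next
  case (Suc n) then show ?case by (simp add: Sb_def)
qed

lemma Sb_rec: "Sb p (Suc K) (Suc n) = p * Sb p K n + (1 - p) * Sb p K (Suc n)"
proof (induction n)
  case 0 then show ?case by (simp add: Sb_def)
next
  case (Suc n)
  have key: "real (Suc K choose Suc n) * p ^ Suc n * (1 - p) ^ (Suc K - Suc n) =
     p * (real (K choose n) * p ^ n * (1 - p) ^ (K - n)) +
     (1 - p) * (real (K choose Suc n) * p ^ Suc n * (1 - p) ^ (K - Suc n))"
  proof (cases "Suc n \<le> K")
    case True
    then have h: "(1 - p) ^ (K - n) = (1 - p) * (1 - p) ^ (K - Suc n)"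
      by (metis Suc_diff_le diff_Suc_Suc power_Suc)
    show ?thesis unfolding binomial_Suc_Suc diff_Suc_Suc h of_nat_add by (simp add: algebra_simps)
  next
    case False
    then have "K choose Suc n = 0" by simp
    then show ?thesis by (simp add: binomial_Suc_Suc algebra_simps)
  qed
  have "Sb p (Suc K) (Suc (Suc n)) = Sb p (Suc K) (Suc n) + real (Suc K choose Suc n) * p ^ Suc n * (1 - p) ^ (Suc K - Suc n)"
    by (simp add: Sb_def)
  also have "\<dots> = p * Sb p K (Suc n) + (1 - p) * Sb p K (Suc (Suc n))"
    unfolding Suc key by (simp add: Sb_def algebra_simps)
  finally show ?case .
qed

lemma Sb_full: "Sb p K (Suc K) = 1"
proof -
  have "Sb p K (Suc K) = (\<Sum>m\<le>K. real (K choose m) * p ^ m * (1 - p) ^ (K - m))"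
    unfolding Sb_def by (simp add: lessThan_Suc_atMost)
  also have "\<dots> = (p + (1 - p)) ^ K" by (rule binomial_ring[symmetric])
  finally show ?thesis by simp
qed

lemma Sb_K: "Sb p K K = 1 - p ^ K"
proof -
  have "Sb p K (Suc K) = Sb p K K + real (K choose K) * p ^ K * (1 - p) ^ (K - K)"
    by (simp add: Sb_def)
  then show ?thesis using Sb_full[of p K] by simp
qed


lemma card_set_meas:
  assumes fin: "finite I" and S: "S \<in> sets P"
  shows "{y \<in> space (PiM I (\<lambda>_. P)). n \<le> card {i\<in>I. y i \<in> S}} \<in> sets (PiM I (\<lambda>_. P))"
proof -
  let ?g = "\<lambda>y. (\<Sum>i\<in>I. indicator S (y i) :: real)"
  have g: "?g \<in> borel_measurable (PiM I (\<lambda>_. P))"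
  proof (rule borel_measurable_sum)
    fix i assume "i \<in> I"
    show "(\<lambda>y. indicator S (y i) :: real) \<in> borel_measurable (PiM I (\<lambda>_. P))"
      using measurable_compose[OF measurable_component_singleton[OF \<open>i \<in> I\<close>] borel_measurable_indicator[OF S]]
      by (simp add: comp_def)
  qed
  have ceq: "real (card {i\<in>I. y i \<in> S}) = ?g y" for y
  proof -
    have "real (card {i\<in>I. y i \<in> S}) = (\<Sum>i\<in>{i\<in>I. y i \<in> S}. 1)" by simp
    also have "\<dots> = (\<Sum>i\<in>I. if y i \<in> S then 1 else 0)" by (rule sum.inter_filter[OF fin])
    also have "\<dots> = ?g y" by (simp add: indicator_def of_bool_def)
    finally show ?thesis .
  qed
  have "?g -` {real n..} \<inter> space (PiM I (\<lambda>_. P)) \<in> sets (PiM I (\<lambda>_. P))"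
    by (intro measurable_sets[OF g] borel_closed closed_atLeast)
  moreover have "?g -` {real n..} \<inter> space (PiM I (\<lambda>_. P)) = {y \<in> space (PiM I (\<lambda>_. P)). n \<le> card {i\<in>I. y i \<in> S}}"
    using ceq by (auto simp flip: ceq)
  ultimately show ?thesis by simp
qed

lemma binom_bound:
  assumes Pp: "prob_space P" and S: "S \<in> sets P" and sp: "measure P S \<le> p" and p1: "p \<le> 1"
    and fin: "finite I"
  shows "measure (PiM I (\<lambda>_. P)) {y \<in> space (PiM I (\<lambda>_. P)). n \<le> card {i\<in>I. y i \<in> S}}
           \<le> 1 - Sb p (card I) n"
  using fin
proof (induction I arbitrary: n rule: finite_induct)
  case empty
  interpret PE: prob_space "PiM {} (\<lambda>_. P)" by (rule prob_space_PiM) (use Pp in auto)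
  show ?case
  proof (cases n)
    case 0
    then show ?thesis using PE.prob_le_1 by (simp add: Sb_0)
  next
    case (Suc m)
    then show ?thesis by (simp add: Sb_zero_K)
  qed
next
  case (insert j I)
  interpret P: prob_space P by (rule Pp)
  interpret PS: product_sigma_finite "\<lambda>_. P"
    unfolding product_sigma_finite_def using prob_space_imp_sigma_finite[OF Pp] by simp
  interpret PI: prob_space "PiM I (\<lambda>_. P)" by (rule prob_space_PiM) (use Pp in auto)
  interpret PJ: prob_space "PiM (insert j I) (\<lambda>_. P)" by (rule prob_space_PiM) (use Pp in auto)
  show ?case
  proof (cases n)
    case 0
    then show ?thesis using PJ.prob_le_1 by (simp add: Sb_0)
  next
    case (Suc m)
    define A where "A k = {y \<in> space (PiM I (\<lambda>_. P)). k \<le> card {i\<in>I. y i \<in> S}}" for k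
    define B where "B = {y \<in> space (PiM (insert j I) (\<lambda>_. P)). Suc m \<le> card {i\<in>insert j I. y i \<in> S}}"
    have Bm: "B \<in> sets (PiM (insert j I) (\<lambda>_. P))"
      unfolding B_def by (rule card_set_meas) (use insert.hyps S in auto)
    have Am: "A k \<in> sets (PiM I (\<lambda>_. P))" for k
      unfolding A_def by (rule card_set_meas) (use insert.hyps S in auto)
    have cardeq: "card {i\<in>insert j I. (x(j:=y)) i \<in> S} = card {i\<in>I. x i \<in> S} + (if y \<in> S then 1 else 0)" for x y
    proof -
      have "{i\<in>insert j I. (x(j:=y)) i \<in> S} = (if y \<in> S then insert j {i\<in>I. x i \<in> S} else {i\<in>I. x i \<in> S})"
        using insert.hyps(2) by auto
      then show ?thesis using insert.hyps by (simp add: card_insert_disjoint)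
    qed
    have ind: "indicator B (x(j:=y)) = indicator S y * indicator (A m) x + indicator (space P - S) y * (indicator (A (Suc m)) x :: ennreal)"
      if x: "x \<in> space (PiM I (\<lambda>_. P))" and y: "y \<in> space P" for x y
    proof -
      have xy: "x(j:=y) \<in> space (PiM (insert j I) (\<lambda>_. P))"
        using measurable_space[OF measurable_component_update[OF x insert.hyps(2)] y] .
      have inB: "x(j:=y) \<in> B \<longleftrightarrow> Suc m \<le> card {i\<in>I. x i \<in> S} + (if y \<in> S then 1 else 0)"
        unfolding B_def mem_Collect_eq cardeq using xy by simp
      show ?thesis
      proof (cases "y \<in> S")
        case True
        have "x(j:=y) \<in> B \<longleftrightarrow> x \<in> A m" using inB True x unfolding A_def by simp
        then show ?thesis using True y by (simp split: split_indicator)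
      next
        case False
        have "x(j:=y) \<in> B \<longleftrightarrow> x \<in> A (Suc m)" using inB False x unfolding A_def by simp
        then show ?thesis using False y by (simp split: split_indicator)
      qed
    qed
    have Sc: "space P - S \<in> sets P" using S by auto
    have inner: "(\<integral>\<^sup>+ y. indicator B (x(j:=y)) \<partial>P) =
        emeasure P S * indicator (A m) x + emeasure P (space P - S) * (indicator (A (Suc m)) x :: ennreal)"
      if x: "x \<in> space (PiM I (\<lambda>_. P))" for x
    proof -
      have "(\<integral>\<^sup>+ y. indicator B (x(j:=y)) \<partial>P) =
          (\<integral>\<^sup>+ y. indicator S y * indicator (A m) x + indicator (space P - S) y * (indicator (A (Suc m)) x :: ennreal) \<partial>P)"
        by (rule nn_integral_cong) (use ind x in auto)
      also have "\<dots> = (\<integral>\<^sup>+ y. indicator S y * indicator (A m) x \<partial>P) + (\<integral>\<^sup>+ y. indicator (space P - S) y * (indicator (A (Suc m)) x :: ennreal) \<partial>P)"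
        by (rule nn_integral_add) (use S Sc in auto)
      also have "\<dots> = emeasure P S * indicator (A m) x + emeasure P (space P - S) * (indicator (A (Suc m)) x :: ennreal)"
        using S Sc by (simp add: nn_integral_multc)
      finally show ?thesis .
    qed
    have "emeasure (PiM (insert j I) (\<lambda>_. P)) B = (\<integral>\<^sup>+ w. indicator B w \<partial>PiM (insert j I) (\<lambda>_. P))"
      using Bm by simp
    also have "\<dots> = (\<integral>\<^sup>+ x. (\<integral>\<^sup>+ y. indicator B (x(j:=y)) \<partial>P) \<partial>PiM I (\<lambda>_. P))"
      by (rule PS.product_nn_integral_insert) (use insert.hyps Bm in auto)
    also have "\<dots> = (\<integral>\<^sup>+ x. emeasure P S * indicator (A m) x + emeasure P (space P - S) * (indicator (A (Suc m)) x :: ennreal) \<partial>PiM I (\<lambda>_. P))"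
      by (rule nn_integral_cong) (use inner in auto)
    also have "\<dots> = emeasure P S * emeasure (PiM I (\<lambda>_. P)) (A m) + emeasure P (space P - S) * emeasure (PiM I (\<lambda>_. P)) (A (Suc m))"
      using Am by (subst nn_integral_add) (auto simp: nn_integral_cmult)
    finally have eB: "emeasure (PiM (insert j I) (\<lambda>_. P)) B =
      emeasure P S * emeasure (PiM I (\<lambda>_. P)) (A m) + emeasure P (space P - S) * emeasure (PiM I (\<lambda>_. P)) (A (Suc m))" .
    define s where "s = measure P S"
    define a1 where "a1 = measure (PiM I (\<lambda>_. P)) (A m)"
    define a2 where "a2 = measure (PiM I (\<lambda>_. P)) (A (Suc m))"
    have s0: "0 \<le> s" "s \<le> 1" unfolding s_def by auto
    have a0: "0 \<le> a1" "0 \<le> a2" unfolding a1_def a2_def by auto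
    have cS: "measure P (space P - S) = 1 - s" unfolding s_def using S P.prob_compl by auto
    have e1: "emeasure P S = ennreal s" by (simp add: P.emeasure_eq_measure s_def)
    have e2: "emeasure P (space P - S) = ennreal (1 - s)" using cS by (simp add: P.emeasure_eq_measure)
    have e3: "emeasure (PiM I (\<lambda>_. P)) (A m) = ennreal a1" by (simp add: PI.emeasure_eq_measure a1_def)
    have e4: "emeasure (PiM I (\<lambda>_. P)) (A (Suc m)) = ennreal a2" by (simp add: PI.emeasure_eq_measure a2_def)
    have "emeasure (PiM (insert j I) (\<lambda>_. P)) B = ennreal s * ennreal a1 + ennreal (1 - s) * ennreal a2"
      unfolding eB e1 e2 e3 e4 ..
    also have "\<dots> = ennreal (s * a1 + (1 - s) * a2)"
      using s0 a0 by (subst ennreal_plus) (auto simp: ennreal_mult)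
    finally have eB': "emeasure (PiM (insert j I) (\<lambda>_. P)) B = ennreal (s * a1 + (1 - s) * a2)" .
    have "measure (PiM (insert j I) (\<lambda>_. P)) B = enn2real (emeasure (PiM (insert j I) (\<lambda>_. P)) B)"
      by (simp add: measure_def)
    also have "\<dots> = s * a1 + (1 - s) * a2" unfolding eB' using s0 a0 by (intro enn2real_ennreal) simp
    finally have mB: "measure (PiM (insert j I) (\<lambda>_. P)) B = s * a1 + (1 - s) * a2" .
    have ih1: "a1 \<le> 1 - Sb p (card I) m" unfolding a1_def A_def by (rule insert.IH)
    have ih2: "a2 \<le> 1 - Sb p (card I) (Suc m)" unfolding a2_def A_def by (rule insert.IH)
    have a21: "a2 \<le> a1" unfolding a1_def a2_def
      by (rule PI.finite_measure_mono) (use Am in \<open>auto simp: A_def\<close>)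
    have sp': "s \<le> p" using sp s_def by simp
    have "s * a1 + (1 - s) * a2 = a2 + s * (a1 - a2)" by (simp add: algebra_simps)
    also have "\<dots> \<le> a2 + p * (a1 - a2)" using sp' a21 by (simp add: mult_right_mono)
    also have "\<dots> = p * a1 + (1 - p) * a2" by (simp add: algebra_simps)
    also have "\<dots> \<le> p * (1 - Sb p (card I) m) + (1 - p) * (1 - Sb p (card I) (Suc m))"
      using ih1 ih2 p1 sp' s0 by (intro add_mono mult_left_mono) auto
    also have "\<dots> = 1 - Sb p (card (insert j I)) n"
      using insert.hyps by (simp add: Suc Sb_rec algebra_simps)
    finally show ?thesis using mB unfolding B_def Suc by simp
  qed
qed



lemma kth_count:
  fixes f :: "nat \<Rightarrow> real"
  assumes fin: "finite I" and n1: "1 \<le> n" and nI: "n \<le> card I"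
  shows "n \<le> card {i\<in>I. f i \<le> sort (map f (sorted_list_of_set I)) ! (n - 1)}"
proof -
  define L where "L = map f (sorted_list_of_set I)"
  define s where "s = sort L"
  define \<alpha> where "\<alpha> = s ! (n - 1)"
  have len: "length s = card I" unfolding s_def L_def using fin by simp
  have srt: "sorted s" unfolding s_def by simp
  have tk: "\<forall>v\<in>set (take n s). v \<le> \<alpha>"
  proof
    fix v assume "v \<in> set (take n s)"
    then obtain j where j: "j < length (take n s)" "v = take n s ! j" by (metis in_set_conv_nth)
    then have "j < n" "v = s ! j" by auto
    then show "v \<le> \<alpha>" unfolding \<alpha>_def using sorted_nth_mono[OF srt, of j "n - 1"] len nI n1 by auto
  qed
  have "n = length (take n s)" using len nI by simp
  also have "\<dots> = length (filter (\<lambda>v. v \<le> \<alpha>) (take n s))" using tk by simp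
  also have "\<dots> \<le> length (filter (\<lambda>v. v \<le> \<alpha>) (take n s @ drop n s))" by (simp only: filter_append length_append le_add1)
  also have "\<dots> = length (filter (\<lambda>v. v \<le> \<alpha>) s)" by simp
  also have "\<dots> = length (filter (\<lambda>v. v \<le> \<alpha>) L)" unfolding s_def by (simp add: filter_sort)
  also have "\<dots> = length (filter (\<lambda>i. f i \<le> \<alpha>) (sorted_list_of_set I))" unfolding L_def by (simp add: filter_map comp_def)
  also have "\<dots> = card ({i. f i \<le> \<alpha>} \<inter> I)" using fin by (simp add: distinct_length_filter)
  also have "{i. f i \<le> \<alpha>} \<inter> I = {i\<in>I. f i \<le> \<alpha>}" by auto
  finally show ?thesis unfolding \<alpha>_def s_def L_def .
qed



lemma cont_mv[continuous_intros]:
  fixes M :: "real^'a^'b"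
  shows "continuous_on S f \<Longrightarrow> continuous_on S (\<lambda>z. M *v f z)"
  using continuous_on_compose2[OF matrix_vector_mult_linear_continuous_on[of UNIV M]] by auto

lemma closed_vec_le:
  fixes f g :: "'a::topological_space \<Rightarrow> real^'r"
  assumes "continuous_on UNIV f" "continuous_on UNIV g"
  shows "closed {z. f z \<le> g z}"
proof -
  have "{z. f z \<le> g z} = {z. \<forall>i. f z $ i \<le> g z $ i}" by (simp add: less_eq_vec_def)
  moreover have "closed {z. \<forall>i. f z $ i \<le> g z $ i}"
    by (intro closed_Collect_all closed_Collect_le continuous_on_component assms)
  ultimately show ?thesis by simp
qed

lemma lp_sublevel_borel:
  fixes A :: "real^'m^'r" and B :: "real^'k^'r" and D :: "real^'n^'r" and E :: "real^'r" and F :: "real^'m"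
    and x :: "real^'k"
  shows "{u. Qval A B D E F x u \<le> ereal \<eta>} \<in> sets borel"
proof -
  define cnd where "cnd u y \<longleftrightarrow> B *v x + D *v u + E \<le> A *v y" for u and y :: "real^'m"
  define W where "W t = {u. \<exists>y. cnd u y \<and> F \<bullet> y < t}" for t
  define C where "C t j = {z :: (real^'n) \<times> (real^'m). cnd (fst z) (snd z) \<and> F \<bullet> snd z \<le> t - 1 / (real j + 1)
      \<and> norm (fst z) \<le> real j \<and> norm (snd z) \<le> real j}" for t j
  have Qeq: "Qval A B D E F x u = (INF y\<in>{y. cnd u y}. ereal (F \<bullet> y))" for u
    unfolding Qval_def Yset_def cnd_def ..
  have eq1: "{u. Qval A B D E F x u \<le> ereal \<eta>} = (\<Inter>k::nat. W (\<eta> + 1 / (real k + 1)))"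
  proof (intro equalityI subsetI)
    fix u assume "u \<in> {u. Qval A B D E F x u \<le> ereal \<eta>}"
    then have le: "Qval A B D E F x u \<le> ereal \<eta>" by simp
    show "u \<in> (\<Inter>k::nat. W (\<eta> + 1 / (real k + 1)))"
    proof
      fix k :: nat assume "k \<in> UNIV"
      have "ereal \<eta> < ereal (\<eta> + 1 / (real k + 1))" by simp
      with le have "(INF y\<in>{y. cnd u y}. ereal (F \<bullet> y)) < ereal (\<eta> + 1 / (real k + 1))"
        unfolding Qeq by (rule le_less_trans)
      then obtain y where "cnd u y" "ereal (F \<bullet> y) < ereal (\<eta> + 1 / (real k + 1))"
        unfolding INF_less_iff by auto
      then show "u \<in> W (\<eta> + 1 / (real k + 1))" unfolding W_def by auto
    qed
  next
    fix u assume u: "u \<in> (\<Inter>k::nat. W (\<eta> + 1 / (real k + 1)))"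
    have "Qval A B D E F x u \<le> ereal \<eta>"
    proof (rule ereal_le_epsilon2)
      fix e :: real assume e: "0 < e"
      obtain k :: nat where k: "k > 0" "inverse (real k) < e" using ex_inverse_of_nat_less[OF e] by blast
      have "1 / (real k + 1) \<le> inverse (real k)" using k by (simp add: field_simps)
      then have ke: "1 / (real k + 1) < e" using k by simp
      from u have "u \<in> W (\<eta> + 1 / (real k + 1))" by blast
      then obtain y where y: "cnd u y" "F \<bullet> y < \<eta> + 1 / (real k + 1)" unfolding W_def by auto
      have "Qval A B D E F x u \<le> ereal (F \<bullet> y)" unfolding Qeq using y(1) by (intro INF_lower) simp
      also have "\<dots> \<le> ereal \<eta> + ereal e" using y(2) ke by simp
      finally show "Qval A B D E F x u \<le> ereal \<eta> + ereal e" .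
    qed
    then show "u \<in> {u. Qval A B D E F x u \<le> ereal \<eta>}" by simp
  qed
  have eq2: "W t = (\<Union>j. fst ` C t j)" for t
  proof (intro equalityI subsetI)
    fix u assume "u \<in> W t"
    then obtain y where y: "cnd u y" "F \<bullet> y < t" unfolding W_def by auto
    have "0 < t - F \<bullet> y" using y by simp
    then obtain k :: nat where k: "k > 0" "inverse (real k) < t - F \<bullet> y" using ex_inverse_of_nat_less by blast
    obtain j1 :: nat where j1: "max (norm u) (norm y) \<le> real j1" using real_arch_simple by blast
    define j where "j = max k j1"
    have "1 / (real j + 1) \<le> inverse (real k)" using k unfolding j_def by (simp add: field_simps)
    then have "F \<bullet> y \<le> t - 1 / (real j + 1)" using k by simp
    moreover have "norm u \<le> real j" "norm y \<le> real j" using j1 unfolding j_def by auto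
    ultimately have "(u, y) \<in> C t j" unfolding C_def using y by auto
    then show "u \<in> (\<Union>j. fst ` C t j)" by force
  next
    fix u assume "u \<in> (\<Union>j. fst ` C t j)"
    then obtain j y where "(u, y) \<in> C t j" by auto
    then have h: "cnd u y" "F \<bullet> y \<le> t - 1 / (real j + 1)" unfolding C_def by auto
    have "0 < 1 / (real j + 1)" by simp
    then have "F \<bullet> y < t" using h(2) by linarith
    then show "u \<in> W t" unfolding W_def using h(1) by auto
  qed
  have cC: "compact (C t j)" for t j
  proof (subst compact_eq_bounded_closed, intro conjI)
    have "C t j \<subseteq> cball 0 (real j) \<times> cball 0 (real j)" unfolding C_def by auto
    then show "bounded (C t j)" by (rule bounded_subset[OF bounded_Times[OF bounded_cball bounded_cball]])
  next
    have c1: "closed {z :: (real^'n) \<times> (real^'m). cnd (fst z) (snd z)}"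
      unfolding cnd_def by (intro closed_vec_le continuous_intros)
    have c2: "closed {z :: (real^'n) \<times> (real^'m). F \<bullet> snd z \<le> t - 1 / (real j + 1)}"
      by (intro closed_Collect_le continuous_intros)
    have c3: "closed {z :: (real^'n) \<times> (real^'m). norm (fst z) \<le> real j}"
      by (intro closed_Collect_le continuous_intros)
    have c4: "closed {z :: (real^'n) \<times> (real^'m). norm (snd z) \<le> real j}"
      by (intro closed_Collect_le continuous_intros)
    have "C t j = {z. cnd (fst z) (snd z)} \<inter> {z. F \<bullet> snd z \<le> t - 1 / (real j + 1)} \<inter>
        {z. norm (fst z) \<le> real j} \<inter> {z. norm (snd z) \<le> real j}" unfolding C_def by auto
    then show "closed (C t j)" using c1 c2 c3 c4 by (simp add: closed_Int)
  qed
  have "fst ` C t j \<in> sets borel" for t j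
    by (intro borel_closed compact_imp_closed compact_continuous_image continuous_on_fst continuous_on_id cC)
  then have "W t \<in> sets borel" for t unfolding eq2 by auto
  then show ?thesis unfolding eq1 by auto
qed


lemma ereal_le_add_iff: "(a::ereal) \<le> ereal c + b \<longleftrightarrow> a - ereal c \<le> b"
  by (cases a; cases b) auto

lemma ereal_le_by_reals:
  fixes s t :: ereal
  assumes h: "\<And>r. s \<le> ereal r \<Longrightarrow> t \<le> ereal r"
  shows "t \<le> s"
proof (cases s)
  case (real r) then show ?thesis using h[of r] by simp
next
  case PInf then show ?thesis by simp
next
  case MInf
  then have all: "t \<le> ereal r" for r using h by simp
  show ?thesis
  proof (cases t)
    case (real r0) then show ?thesis using all[of "r0 - 1"] by simp
  next
    case PInf then show ?thesis using all[of 0] by simp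
  next
    case MInf then show ?thesis by simp
  qed
qed

lemma det_part2:
  fixes P :: "(real^'n) measure"
    and X :: "(real^'k) set"
    and A :: "real^'m^'r" and B :: "real^'k^'r" and C :: "real^'k"
    and D :: "real^'n^'r" and E :: "real^'r" and F :: "real^'m"
  assumes Pp: "prob_space P" and Pb: "sets P = sets borel"
    and U0full: "measure P {e \<in> space P. uhat + e \<in> U0} = 1"
    and Em: "Ev \<in> sets P" and Ebig: "measure P Ev \<ge> 1 - \<epsilon>"
    and x0X: "x0 \<in> X"
    and opt: "\<forall>x\<in>X. robval A B C D E F {u \<in> U0. u - uhat \<in> Ev} x0 \<le> robval A B C D E F {u \<in> U0. u - uhat \<in> Ev} x"
  shows "O_cc P uhat X A B C D E F \<epsilon> \<le> O_x P uhat A B C D E F \<epsilon> x0 \<and>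
         O_x P uhat A B C D E F \<epsilon> x0 \<le> O_rob X A B C D E F {u \<in> U0. u - uhat \<in> Ev}"
proof
  interpret P: prob_space P by (rule Pp)
  define H where "H = {\<eta>::real. measure P {e \<in> space P. Qval A B D E F x0 (uhat + e) \<le> ereal \<eta>} \<ge> 1 - \<epsilon>}"
  have Ox: "O_x P uhat A B C D E F \<epsilon> x0 = ereal (C \<bullet> x0) + (INF \<eta>\<in>H. ereal \<eta>)"
    unfolding O_x_def H_def ..
  show "O_cc P uhat X A B C D E F \<epsilon> \<le> O_x P uhat A B C D E F \<epsilon> x0"
    unfolding Ox ereal_le_add_iff
  proof (rule INF_greatest)
    fix \<eta> assume "\<eta> \<in> H"
    then have "ereal (C \<bullet> x0 + \<eta>) \<in> {ereal (C \<bullet> x + \<eta>) | x \<eta>. x \<in> X \<and>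
            measure P {e \<in> space P. Qval A B D E F x (uhat + e) \<le> ereal \<eta>} \<ge> 1 - \<epsilon>}"
      using x0X unfolding H_def by blast
    then have "O_cc P uhat X A B C D E F \<epsilon> \<le> ereal (C \<bullet> x0 + \<eta>)"
      unfolding O_cc_def by (rule Inf_lower)
    then show "O_cc P uhat X A B C D E F \<epsilon> - ereal (C \<bullet> x0) \<le> ereal \<eta>"
      by (cases "O_cc P uhat X A B C D E F \<epsilon>") auto
  qed
  define U1 where "U1 = {u \<in> U0. u - uhat \<in> Ev}"
  define s where "s = (SUP u\<in>U1. Qval A B D E F x0 u)"
  have sp: "space P = UNIV" using sets_eq_imp_space_eq[OF Pb] by simp
  define G where "G = {e \<in> space P. uhat + e \<in> U0} \<inter> Ev"
  have U0m: "{e \<in> space P. uhat + e \<in> U0} \<in> sets P"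
    using U0full measure_notin_sets by fastforce
  have Gm: "G \<in> sets P" unfolding G_def using U0m Em by auto
  have Gbig: "measure P G \<ge> 1 - \<epsilon>"
  proof -
    have c0: "measure P (space P - {e \<in> space P. uhat + e \<in> U0}) = 0"
      using P.prob_compl[OF U0m] U0full by simp
    have "Ev \<subseteq> G \<union> (space P - {e \<in> space P. uhat + e \<in> U0})"
      unfolding G_def using sets.sets_into_space[OF Em] by auto
    then have "measure P Ev \<le> measure P (G \<union> (space P - {e \<in> space P. uhat + e \<in> U0}))"
      using Gm U0m by (intro P.finite_measure_mono) auto
    also have "\<dots> \<le> measure P G + measure P (space P - {e \<in> space P. uhat + e \<in> U0})"
      using Gm U0m by (intro measure_subadditive) auto
    finally show ?thesis using c0 Ebig by simp
  qed
  have key: "(INF \<eta>\<in>H. ereal \<eta>) \<le> s"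
  proof (rule ereal_le_by_reals)
    fix r assume sr: "s \<le> ereal r"
    define T where "T = {e \<in> space P. Qval A B D E F x0 (uhat + e) \<le> ereal r}"
    have Tm: "T \<in> sets P"
    proof -
      have tr: "(\<lambda>e::real^'n. uhat + e) \<in> borel_measurable borel"
        by (intro borel_measurable_continuous_onI continuous_intros)
      have "(\<lambda>e. uhat + e) -` {u. Qval A B D E F x0 u \<le> ereal r} \<inter> space borel \<in> sets borel"
        by (rule measurable_sets[OF tr lp_sublevel_borel])
      then show ?thesis unfolding T_def Pb sp by (simp add: vimage_def)
    qed
    have GT: "G \<subseteq> T"
    proof
      fix e assume "e \<in> G"
      then have "uhat + e \<in> U1" "e \<in> space P" unfolding G_def U1_def by auto
      then have "Qval A B D E F x0 (uhat + e) \<le> s" unfolding s_def by (intro SUP_upper)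
      then show "e \<in> T" unfolding T_def using sr \<open>e \<in> space P\<close> by auto
    qed
    have "1 - \<epsilon> \<le> measure P T"
      using Gbig P.finite_measure_mono[OF GT Tm] by linarith
    then have "r \<in> H" unfolding H_def T_def by simp
    then show "(INF \<eta>\<in>H. ereal \<eta>) \<le> ereal r" by (rule INF_lower)
  qed
  have rob0: "robval A B C D E F U1 x0 = ereal (C \<bullet> x0) + s"
    unfolding robval_def s_def ..
  have "O_x P uhat A B C D E F \<epsilon> x0 \<le> robval A B C D E F U1 x0"
    unfolding Ox rob0 using key by (rule add_left_mono)
  also have "\<dots> \<le> O_rob X A B C D E F U1"
    unfolding O_rob_def using opt unfolding U1_def by (intro INF_greatest) auto
  finally show "O_x P uhat A B C D E F \<epsilon> x0 \<le> O_rob X A B C D E F {u \<in> U0. u - uhat \<in> Ev}"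
    unfolding U1_def .
qed



lemma meas_mdist:
  fixes mu e :: "'a \<Rightarrow> real^'n" and S :: "'a \<Rightarrow> real^'n^'n"
  assumes mu: "\<And>k. (\<lambda>x. mu x $ k) \<in> borel_measurable M"
    and e: "\<And>k. (\<lambda>x. e x $ k) \<in> borel_measurable M"
    and S: "\<And>a b. (\<lambda>x. S x $ a $ b) \<in> borel_measurable M"
  shows "(\<lambda>x. mdist (mu x) (S x) (e x)) \<in> borel_measurable M"
proof -
  have eq: "(\<lambda>x. mdist (mu x) (S x) (e x)) = (\<lambda>x. \<Sum>i\<in>UNIV. (e x $ i - mu x $ i) *
      (\<Sum>j\<in>UNIV. matrix_inv (S x) $ i $ j * (e x $ j - mu x $ j)))"
    unfolding mdist_def inner_vec_def matrix_vector_mult_def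
    by (simp only: vec_lambda_beta vector_minus_component inner_real_def)
  show ?thesis unfolding eq
    by (intro borel_measurable_sum borel_measurable_times borel_measurable_diff mu e meas_minv[OF S])
qed

lemma meas_h:
  fixes w :: "'a \<Rightarrow> nat \<Rightarrow> real^'n" and e :: "'a \<Rightarrow> real^'n"
  assumes w: "\<And>l k. l \<in> I \<Longrightarrow> (\<lambda>x. w x l $ k) \<in> borel_measurable M"
    and e: "\<And>k. (\<lambda>x. e x $ k) \<in> borel_measurable M"
  shows "(\<lambda>x. mdist (smean (w x) I) (scov (w x) I) (e x)) \<in> borel_measurable M"
  by (rule meas_mdist[OF meas_smean[OF w] e meas_scov[OF w]])

lemma card_pred_meas:
  assumes fin: "finite I" and Q: "\<And>i. i \<in> I \<Longrightarrow> {x\<in>space M. Q i x} \<in> sets M"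
  shows "{x\<in>space M. n \<le> card {i\<in>I. Q i x}} \<in> sets M"
proof -
  let ?g = "\<lambda>x. (\<Sum>i\<in>I. indicator {x\<in>space M. Q i x} x :: real)"
  have g: "?g \<in> borel_measurable M"
    by (intro borel_measurable_sum borel_measurable_indicator Q)
  have ceq: "real (card {i\<in>I. Q i x}) = ?g x" if "x \<in> space M" for x
  proof -
    have "real (card {i\<in>I. Q i x}) = (\<Sum>i\<in>{i\<in>I. Q i x}. 1)" by simp
    also have "\<dots> = (\<Sum>i\<in>I. if Q i x then 1 else 0)" by (rule sum.inter_filter[OF fin])
    also have "\<dots> = ?g x" using that by (simp add: indicator_def of_bool_def)
    finally show ?thesis .
  qed
  have "?g -` {real n..} \<inter> space M \<in> sets M"
    by (intro measurable_sets[OF g] borel_closed closed_atLeast)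
  moreover have "?g -` {real n..} \<inter> space M = {x\<in>space M. n \<le> card {i\<in>I. Q i x}}"
    using ceq by (auto simp flip: ceq)
  ultimately show ?thesis by simp
qed

lemma smean_scov_cong:
  assumes "\<And>i. i \<in> I \<Longrightarrow> w i = w' i"
  shows "smean w I = smean w' I" "scov w I = scov w' I"
proof -
  show sm: "smean w I = smean w' I" unfolding smean_def using assms by (simp cong: sum.cong)
  show "scov w I = scov w' I" unfolding scov_def sm using assms by (simp cong: sum.cong)
qed



theorem theorem1:
  fixes P :: "(real^'n) measure"
    and N :: nat and I1 I2 :: "nat set"
    and \<epsilon> \<delta> :: real
    and uhat Ulow Uup :: "real^'n"
    and X :: "(real^'k) set"
    and A :: "real^'m^'r" and B :: "real^'k^'r" and C :: "real^'k"
    and D :: "real^'n^'r" and E :: "real^'r" and F :: "real^'m"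
    and x0 :: "(nat \<Rightarrow> real^'n) \<Rightarrow> real^'k"
  defines "PN \<equiv> PiM {..<N} (\<lambda>_. P)"
    and "U0 \<equiv> {u. Ulow \<le> u \<and> u \<le> Uup}"
  assumes P_prob: "prob_space P"
    and P_borel: "sets P = sets borel"
    and P_cont: "absolutely_continuous lborel P"
    and U0_full: "measure P {e \<in> space P. uhat + e \<in> U0} = 1"
    and eps: "0 < \<epsilon>" "\<epsilon> < 1"
    and delta: "0 < \<delta>" "\<delta> < 1"
    and I1_sub: "I1 \<subseteq> {..<N}" and I2_sub: "I2 \<subseteq> {..<N}"
    and disj: "I1 \<inter> I2 = {}"
    and N2_large: "real (card I2) \<ge> log (1 - \<epsilon>) \<delta>"
    and Sigma_inv: "AE \<omega> in PN. invertible (scov \<omega> I1)"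
    and x0_opt: "\<And>\<omega>. \<omega> \<in> space PN \<Longrightarrow> x0 \<omega> \<in> X \<and>
        (\<forall>x\<in>X. robval A B C D E F {u \<in> U0. u - uhat \<in> Eset \<omega> I1 I2 \<epsilon> \<delta>} (x0 \<omega>)
               \<le> robval A B C D E F {u \<in> U0. u - uhat \<in> Eset \<omega> I1 I2 \<epsilon> \<delta>} x)"
  shows "prob_atleast PN {\<omega> \<in> space PN. measure P (Eset \<omega> I1 I2 \<epsilon> \<delta>) \<ge> 1 - \<epsilon>} (1 - \<delta>) \<and>
         prob_atleast PN {\<omega> \<in> space PN.
           O_cc P uhat X A B C D E F \<epsilon> \<le> O_x P uhat A B C D E F \<epsilon> (x0 \<omega>) \<and>
           O_x P uhat A B C D E F \<epsilon> (x0 \<omega>)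
             \<le> O_rob X A B C D E F {u \<in> U0. u - uhat \<in> Eset \<omega> I1 I2 \<epsilon> \<delta>}} (1 - \<delta>)"
proof -
  interpret P: prob_space P by (rule P_prob)
  interpret PS: product_sigma_finite "\<lambda>_. P"
    unfolding product_sigma_finite_def using prob_space_imp_sigma_finite[OF P_prob] by simp
  interpret PN: prob_space PN unfolding PN_def by (rule prob_space_PiM) (use P_prob in auto)
  have spP: "space P = UNIV" using sets_eq_imp_space_eq[OF P_borel] by simp
  have fin1: "finite I1" using I1_sub finite_subset by blast
  have fin2: "finite I2" using I2_sub finite_subset by blast
  define K where "K = card I2"
  define n where "n = nstar K \<epsilon> \<delta>"
  have Sbeq: "(\<Sum>m<j. real (K choose m) * (1 - \<epsilon>) ^ m * \<epsilon> ^ (K - m)) = Sb (1 - \<epsilon>) K j" for j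
    unfolding Sb_def by simp
  have nLeast: "n = (LEAST j. Sb (1 - \<epsilon>) K j \<ge> 1 - \<delta>)"
    unfolding n_def nstar_def Sbeq ..
  have powK: "(1 - \<epsilon>) ^ K \<le> \<delta>"
  proof -
    have "(1 - \<epsilon>) ^ K = (1 - \<epsilon>) powr (real K)" using eps by (simp add: powr_realpow)
    also have "\<dots> \<le> (1 - \<epsilon>) powr (log (1 - \<epsilon>) \<delta>)"
      using N2_large eps unfolding K_def by (intro powr_mono') auto
    also have "\<dots> = \<delta>" using eps delta by simp
    finally show ?thesis .
  qed
  have wK: "Sb (1 - \<epsilon>) K K \<ge> 1 - \<delta>" using powK by (simp add: Sb_K)
  have nK: "n \<le> K" unfolding nLeast by (rule Least_le) (rule wK)
  have nS: "Sb (1 - \<epsilon>) K n \<ge> 1 - \<delta>" unfolding nLeast by (rule LeastI) (rule wK)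
  have n1: "1 \<le> n"
  proof (rule ccontr)
    assume "\<not> 1 \<le> n" then have "n = 0" by simp
    then show False using nS delta by (simp add: Sb_0)
  qed
  define hh where "hh \<omega> e = mdist (smean \<omega> I1) (scov \<omega> I1) e" for \<omega> :: "nat \<Rightarrow> real^'n" and e
  define g where "g \<omega> e = measure P {e' \<in> space P. hh \<omega> e' \<le> hh \<omega> e}" for \<omega> e
  define Bad where "Bad = {\<omega> \<in> space PN. n \<le> card {i\<in>I2. g \<omega> (\<omega> i) < 1 - \<epsilon>}}"
  have hh_meas: "hh \<omega> \<in> borel_measurable P" for \<omega>
  proof -
    have "(\<lambda>e. mdist (smean ((\<lambda>_. \<omega>) e) I1) (scov ((\<lambda>_. \<omega>) e) I1) (id e)) \<in> borel_measurable P"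
    proof (rule meas_h)
      show "(\<lambda>x. id x $ k) \<in> borel_measurable P" for k
        by (rule comp_meas) (simp add: measurable_cong_sets[OF P_borel refl])
    qed simp
    then show ?thesis unfolding hh_def[abs_def] by simp
  qed
  have Eset_eq: "Eset \<omega> I1 I2 \<epsilon> \<delta> = {e \<in> space P. hh \<omega> e \<le> alpha_thr \<omega> I1 I2 \<epsilon> \<delta>}" for \<omega>
    unfolding Eset_def hh_def spP by simp
  have Eset_meas: "Eset \<omega> I1 I2 \<epsilon> \<delta> \<in> sets P" for \<omega>
  proof -
    have "hh \<omega> -` {..alpha_thr \<omega> I1 I2 \<epsilon> \<delta>} \<inter> space P \<in> sets P"
      by (intro measurable_sets[OF hh_meas] borel_closed closed_atMost)
    moreover have "hh \<omega> -` {..alpha_thr \<omega> I1 I2 \<epsilon> \<delta>} \<inter> space P = Eset \<omega> I1 I2 \<epsilon> \<delta>"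
      unfolding Eset_eq by auto
    ultimately show ?thesis by simp
  qed
  have good: "measure P (Eset \<omega> I1 I2 \<epsilon> \<delta>) \<ge> 1 - \<epsilon>" if \<omega>: "\<omega> \<in> space PN" "\<omega> \<notin> Bad" for \<omega>
  proof (rule ccontr)
    assume small: "\<not> measure P (Eset \<omega> I1 I2 \<epsilon> \<delta>) \<ge> 1 - \<epsilon>"
    define \<alpha> where "\<alpha> = alpha_thr \<omega> I1 I2 \<epsilon> \<delta>"
    have \<alpha>eq: "\<alpha> = sort (map (\<lambda>i. hh \<omega> (\<omega> i)) (sorted_list_of_set I2)) ! (n - 1)"
      unfolding \<alpha>_def alpha_thr_def hh_def n_def K_def ..
    have cnt: "n \<le> card {i\<in>I2. hh \<omega> (\<omega> i) \<le> \<alpha>}"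
      unfolding \<alpha>eq using kth_count[OF fin2 n1, of "\<lambda>i. hh \<omega> (\<omega> i)"] nK unfolding K_def by simp
    have sub: "{i\<in>I2. hh \<omega> (\<omega> i) \<le> \<alpha>} \<subseteq> {i\<in>I2. g \<omega> (\<omega> i) < 1 - \<epsilon>}"
    proof
      fix i assume i: "i \<in> {i\<in>I2. hh \<omega> (\<omega> i) \<le> \<alpha>}"
      have "g \<omega> (\<omega> i) \<le> measure P (Eset \<omega> I1 I2 \<epsilon> \<delta>)"
        unfolding g_def
      proof (rule P.finite_measure_mono)
        show "{e' \<in> space P. hh \<omega> e' \<le> hh \<omega> (\<omega> i)} \<subseteq> Eset \<omega> I1 I2 \<epsilon> \<delta>"
          unfolding Eset_eq \<alpha>_def[symmetric] using i by auto
      qed (rule Eset_meas)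
      then show "i \<in> {i\<in>I2. g \<omega> (\<omega> i) < 1 - \<epsilon>}" using i small by auto
    qed
    have "n \<le> card {i\<in>I2. g \<omega> (\<omega> i) < 1 - \<epsilon>}"
    proof -
      have "card {i\<in>I2. hh \<omega> (\<omega> i) \<le> \<alpha>} \<le> card {i\<in>I2. g \<omega> (\<omega> i) < 1 - \<epsilon>}"
        by (rule card_mono[OF _ sub]) (use fin2 in simp)
      then show ?thesis using cnt by linarith
    qed
    then show False using \<omega> unfolding Bad_def by simp
  qed
  have mPP: "measurable PN P = measurable PN borel" by (rule measurable_cong_sets[OF refl P_borel])
  have compPN: "(\<lambda>\<omega>. \<omega> l) \<in> borel_measurable PN" if "l \<in> {..<N}" for l
  proof -
    have "(\<lambda>\<omega>. \<omega> l) \<in> measurable PN P" unfolding PN_def by (rule measurable_component_singleton) (use that in simp)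
    then show ?thesis using mPP by simp
  qed
  have idP: "(\<lambda>x. x) \<in> borel_measurable P" by (rule measurable_ident_sets[OF P_borel])
  have gmeas: "(\<lambda>\<omega>. g \<omega> (\<omega> i)) \<in> borel_measurable PN" if i: "i \<in> I2" for i
  proof -
    have w: "(\<lambda>z. fst z l $ k) \<in> borel_measurable (PN \<Otimes>\<^sub>M P)" if "l \<in> I1" for l k
      by (rule comp_meas[OF measurable_compose[OF measurable_fst compPN]]) (use that I1_sub in auto)
    have f1: "(\<lambda>z. hh (fst z) (snd z)) \<in> borel_measurable (PN \<Otimes>\<^sub>M P)"
      unfolding hh_def
      by (rule meas_h[OF w comp_meas[OF measurable_compose[OF measurable_snd idP]]])
    have f2: "(\<lambda>z. hh (fst z) (fst z i)) \<in> borel_measurable (PN \<Otimes>\<^sub>M P)"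
      unfolding hh_def
      by (rule meas_h[OF w comp_meas[OF measurable_compose[OF measurable_fst compPN]]]) (use i I2_sub in auto)
    define Q where "Q = {z \<in> space (PN \<Otimes>\<^sub>M P). hh (fst z) (snd z) \<le> hh (fst z) (fst z i)}"
    have Qm: "Q \<in> sets (PN \<Otimes>\<^sub>M P)" unfolding Q_def by (rule borel_measurable_le[OF f1 f2])
    have em: "(\<lambda>\<omega>. emeasure P (Pair \<omega> -` Q)) \<in> borel_measurable PN"
      by (rule P.measurable_emeasure_Pair[OF Qm])
    have sec: "Pair \<omega> -` Q = {e' \<in> space P. hh \<omega> e' \<le> hh \<omega> (\<omega> i)}" if "\<omega> \<in> space PN" for \<omega>
      unfolding Q_def using that by (auto simp: space_pair_measure)
    have "(\<lambda>\<omega>. enn2real (emeasure P (Pair \<omega> -` Q))) \<in> borel_measurable PN"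
      by (rule borel_measurable_enn2real[OF em])
    then show ?thesis
      by (rule measurable_cong[THEN iffD1, rotated]) (simp add: sec g_def measure_def)
  qed
  have Bad_meas: "Bad \<in> sets PN"
    unfolding Bad_def
  proof (rule card_pred_meas[OF fin2])
    fix i assume i: "i \<in> I2"
    have "(\<lambda>\<omega>. g \<omega> (\<omega> i)) -` {..<1 - \<epsilon>} \<inter> space PN \<in> sets PN"
      by (intro measurable_sets[OF gmeas[OF i]] borel_open open_lessThan)
    moreover have "(\<lambda>\<omega>. g \<omega> (\<omega> i)) -` {..<1 - \<epsilon>} \<inter> space PN = {\<omega> \<in> space PN. g \<omega> (\<omega> i) < 1 - \<epsilon>}" by auto
    ultimately show "{\<omega> \<in> space PN. g \<omega> (\<omega> i) < 1 - \<epsilon>} \<in> sets PN" by simp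
  qed
  define J where "J = {..<N} - I2"
  have JI: "J \<union> I2 = {..<N}" unfolding J_def using I2_sub by auto
  have JI2: "J \<inter> I2 = {}" unfolding J_def by auto
  have finJ: "finite J" unfolding J_def by simp
  have I1J: "I1 \<subseteq> J" unfolding J_def using I1_sub disj by auto
  have PNJ: "PN = PiM (J \<union> I2) (\<lambda>_. P)" unfolding PN_def JI ..
  interpret PJ: prob_space "PiM J (\<lambda>_. P)" by (rule prob_space_PiM) (use P_prob in auto)
  interpret PI2: prob_space "PiM I2 (\<lambda>_. P)" by (rule prob_space_PiM) (use P_prob in auto)
  have inner: "(\<integral>\<^sup>+ y. indicator Bad (merge J I2 (x, y)) \<partial>PiM I2 (\<lambda>_. P)) \<le> ennreal \<delta>"
    if x: "x \<in> space (PiM J (\<lambda>_. P))" for x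
  proof -
    define Sx where "Sx = {e \<in> space P. g x e < 1 - \<epsilon>}"
    have pitx: "Sx \<in> sets P \<and> measure P Sx \<le> 1 - \<epsilon>"
      unfolding Sx_def g_def using pit[OF P_prob hh_meas[of x], of "1 - \<epsilon>"] eps by simp
    define Secx where "Secx = {y \<in> space (PiM I2 (\<lambda>_. P)). n \<le> card {i\<in>I2. y i \<in> Sx}}"
    have Secm: "Secx \<in> sets (PiM I2 (\<lambda>_. P))" unfolding Secx_def by (rule card_set_meas[OF fin2]) (use pitx in simp)
    have ind: "indicator Bad (merge J I2 (x, y)) = (indicator Secx y :: ennreal)"
      if y: "y \<in> space (PiM I2 (\<lambda>_. P))" for y
    proof -
      have xy: "(x, y) \<in> space (PiM J (\<lambda>_. P) \<Otimes>\<^sub>M PiM I2 (\<lambda>_. P))" using x y by (simp add: space_pair_measure)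
      have mem: "merge J I2 (x, y) \<in> space PN"
        unfolding PNJ using measurable_space[OF measurable_merge xy] .
      have hx: "hh (merge J I2 (x, y)) = hh x"
      proof -
        have "\<And>i. i \<in> I1 \<Longrightarrow> merge J I2 (x, y) i = x i" using I1J JI2 by auto
        then show ?thesis unfolding hh_def[abs_def] using smean_scov_cong by metis
      qed
      have gx: "g (merge J I2 (x, y)) = g x" unfolding g_def[abs_def] hx ..
      have "{i\<in>I2. g (merge J I2 (x, y)) (merge J I2 (x, y) i) < 1 - \<epsilon>} = {i\<in>I2. y i \<in> Sx}"
        unfolding gx Sx_def using JI2 spP by auto
      then have "merge J I2 (x, y) \<in> Bad \<longleftrightarrow> y \<in> Secx"
        unfolding Bad_def Secx_def using mem y by simp
      then show ?thesis by (simp split: split_indicator)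
    qed
    have "(\<integral>\<^sup>+ y. indicator Bad (merge J I2 (x, y)) \<partial>PiM I2 (\<lambda>_. P)) = (\<integral>\<^sup>+ y. indicator Secx y \<partial>PiM I2 (\<lambda>_. P))"
      by (rule nn_integral_cong) (rule ind)
    also have "\<dots> = emeasure (PiM I2 (\<lambda>_. P)) Secx" using Secm by simp
    also have "\<dots> = ennreal (measure (PiM I2 (\<lambda>_. P)) Secx)" by (rule PI2.emeasure_eq_measure)
    also have "\<dots> \<le> ennreal \<delta>"
    proof (rule ennreal_leI)
      have "measure (PiM I2 (\<lambda>_. P)) Secx \<le> 1 - Sb (1 - \<epsilon>) (card I2) n"
        unfolding Secx_def by (rule binom_bound[OF P_prob _ _ _ fin2]) (use pitx eps in auto)
      then show "measure (PiM I2 (\<lambda>_. P)) Secx \<le> \<delta>" using nS unfolding K_def by linarith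
    qed
    finally show ?thesis .
  qed
  have "emeasure PN Bad = (\<integral>\<^sup>+ \<omega>. indicator Bad \<omega> \<partial>PN)" using Bad_meas by simp
  also have "\<dots> = (\<integral>\<^sup>+ x. (\<integral>\<^sup>+ y. indicator Bad (merge J I2 (x, y)) \<partial>PiM I2 (\<lambda>_. P)) \<partial>PiM J (\<lambda>_. P))"
    unfolding PNJ by (rule PS.product_nn_integral_fold[OF JI2 finJ fin2]) (use Bad_meas PNJ in simp)
  also have "\<dots> \<le> (\<integral>\<^sup>+ x. ennreal \<delta> \<partial>PiM J (\<lambda>_. P))"
    by (rule nn_integral_mono) (rule inner)
  also have "\<dots> = ennreal \<delta>" by (simp add: PJ.emeasure_space_1)
  finally have "emeasure PN Bad \<le> ennreal \<delta>" .
  then have Bad_small: "measure PN Bad \<le> \<delta>"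
    using delta by (simp add: PN.emeasure_eq_measure)
  define Ag where "Ag = space PN - Bad"
  have Agm: "Ag \<in> sets PN" unfolding Ag_def using Bad_meas by auto
  have Agp: "measure PN Ag \<ge> 1 - \<delta>" unfolding Ag_def using PN.prob_compl[OF Bad_meas] Bad_small by simp
  have Ag1: "Ag \<subseteq> {\<omega> \<in> space PN. measure P (Eset \<omega> I1 I2 \<epsilon> \<delta>) \<ge> 1 - \<epsilon>}"
    unfolding Ag_def using good by auto
  have Ag2: "Ag \<subseteq> {\<omega> \<in> space PN.
           O_cc P uhat X A B C D E F \<epsilon> \<le> O_x P uhat A B C D E F \<epsilon> (x0 \<omega>) \<and>
           O_x P uhat A B C D E F \<epsilon> (x0 \<omega>)
             \<le> O_rob X A B C D E F {u \<in> U0. u - uhat \<in> Eset \<omega> I1 I2 \<epsilon> \<delta>}}"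
  proof
    fix \<omega> assume "\<omega> \<in> Ag"
    then have \<omega>: "\<omega> \<in> space PN" "\<omega> \<notin> Bad" unfolding Ag_def by auto
    have "O_cc P uhat X A B C D E F \<epsilon> \<le> O_x P uhat A B C D E F \<epsilon> (x0 \<omega>) \<and>
           O_x P uhat A B C D E F \<epsilon> (x0 \<omega>)
             \<le> O_rob X A B C D E F {u \<in> U0. u - uhat \<in> Eset \<omega> I1 I2 \<epsilon> \<delta>}"
      by (rule det_part2[OF P_prob P_borel U0_full Eset_meas good[OF \<omega>]])
         (use x0_opt[OF \<omega>(1)] in auto)
    then show "\<omega> \<in> {\<omega> \<in> space PN.
           O_cc P uhat X A B C D E F \<epsilon> \<le> O_x P uhat A B C D E F \<epsilon> (x0 \<omega>) \<and>
           O_x P uhat A B C D E F \<epsilon> (x0 \<omega>)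
             \<le> O_rob X A B C D E F {u \<in> U0. u - uhat \<in> Eset \<omega> I1 I2 \<epsilon> \<delta>}}" using \<omega> by simp
  qed
  show ?thesis unfolding prob_atleast_def using Agm Agp Ag1 Ag2 by blast
qed


end
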